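(* Let $\kappa$ be an infinite cardinal. Then $2^\kappa\nrightarrow(\omega)_\kappa^{\mathrm{AFP}}$. In fact: if $G$ is any abelian group (written additively) with $|G|=2^\kappa$, then there is a colouring $c:G\to\kappa$ such that for all nonzero $x,y\in G$, $c(x)=c(y)$ implies $c(x)\neq c(x+y)$.
   Context: For a group $G$, an ordinal $\mu$ and a $\mu$-sequence $(g_\alpha\mid\alpha<\mu)$ of elements of $G$, its set of adjacent finite products is $\mathrm{AFP}(g_\alpha\mid\alpha<\mu)=\{g_\alpha g_{\alpha+1}\cdots g_{\alpha+n}\mid \alpha<\mu,\ n<\omega\}$ (all indices lying below $\mu$). For a group $G$, an ordinal $\mu$ and a cardinal $\kappa$, $G\rightarrow(\mu)_\kappa^{\mathrm{AFP}}$ means: for every colouring $c:G\to\kappa$ there is an injective $\mu$-sequence $(g_\alpha\mid\alpha<\mu)$ of elements of $G$ such that $\mathrm{AFP}(g_\alpha\mid\alpha<\mu)$ is monochromatic for $c$. For a cardinal $\lambda$, $\lambda\rightarrow(\mu)_\kappa^{\mathrm{AFP}}$ means that $G\rightarrow(\mu)_\kappa^{\mathrm{AFP}}$ holds for every group $G$ with $|G|=\lambda$; $\lambda\nrightarrow(\mu)_\kappa^{\mathrm{AFP}}$ is its negation. *)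

theory Defs
  imports "HOL-Algebra.Group" "HOL-Library.Equipollence" "HOL-Library.FuncSet"
begin

fun afp_prod :: "('a, 'b) monoid_scheme \<Rightarrow> (nat \<Rightarrow> 'a) \<Rightarrow> nat \<Rightarrow> nat \<Rightarrow> 'a" where
  "afp_prod G g a 0 = g a"
| "afp_prod G g a (Suc n) = afp_prod G g a n \<otimes>\<^bsub>G\<^esub> g (a + Suc n)"

definition AFP :: "('a, 'b) monoid_scheme \<Rightarrow> (nat \<Rightarrow> 'a) \<Rightarrow> 'a set" where
  "AFP G g = {afp_prod G g a n | a n. True}"

text \<open>G \<rightarrow> (omega)^AFP_kappa, where the cardinal kappa is represented by a set K of that size.\<close>
definition AFP_arrow_omega :: "('a, 'b) monoid_scheme \<Rightarrow> 'k set \<Rightarrow> bool" where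
  "AFP_arrow_omega G K \<longleftrightarrow>
     (\<forall>c \<in> carrier G \<rightarrow> K. \<exists>g :: nat \<Rightarrow> 'a.
        inj g \<and> range g \<subseteq> carrier G \<and> (\<exists>col. \<forall>x \<in> AFP G g. c x = col))"

end

theory Submission
  imports Defs "HOL-Algebra.Free_Abelian_Groups" "HOL-Library.Function_Algebras" "HOL-Library.Product_Plus"
begin


quotient_type qz = rat / "\<lambda>x y. x - y \<in> \<int>"
  unfolding equivp_def
proof (intro allI)
  fix x y :: rat
  show "(x - y \<in> \<int>) = ((\<lambda>y'. x - y' \<in> \<int>) = (\<lambda>z. y - z \<in> \<int>))"
  proof
    assume a: "x - y \<in> \<int>"
    show "(\<lambda>y'. x - y' \<in> \<int>) = (\<lambda>z. y - z \<in> \<int>)"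
    proof
      fix z
      have "x - z = (x - y) + (y - z)" "y - z = (y - x) + (x - z)" "y - x = - (x - y)" by simp_all
      then show "(x - z \<in> \<int>) = (y - z \<in> \<int>)" using a
        by (metis Ints_add Ints_minus diff_add_cancel minus_diff_eq)
    qed
  next
    assume "(\<lambda>y'. x - y' \<in> \<int>) = (\<lambda>z. y - z \<in> \<int>)"
    then have "(x - y \<in> \<int>) = (y - y \<in> \<int>)" by metis
    then show "x - y \<in> \<int>" by simp
  qed
qed

instantiation qz :: ab_group_add
begin
lift_definition zero_qz :: qz is 0 .
lift_definition plus_qz :: "qz \<Rightarrow> qz \<Rightarrow> qz" is "(+)"
proof -
  fix a b c d :: rat
  assume "a - b \<in> \<int>" "c - d \<in> \<int>"
  then have "(a - b) + (c - d) \<in> \<int>" by (rule Ints_add)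
  then show "a + c - (b + d) \<in> \<int>" by (simp add: algebra_simps)
qed
lift_definition uminus_qz :: "qz \<Rightarrow> qz" is uminus
proof -
  fix a b :: rat
  assume "a - b \<in> \<int>"
  then have "- (a - b) \<in> \<int>" by (rule Ints_minus)
  then show "- a - (- b) \<in> \<int>" by simp
qed
lift_definition minus_qz :: "qz \<Rightarrow> qz \<Rightarrow> qz" is "(-)"
proof -
  fix a b c d :: rat
  assume "a - b \<in> \<int>" "c - d \<in> \<int>"
  then have "(a - b) - (c - d) \<in> \<int>" by (rule Ints_diff)
  then show "a - c - (b - d) \<in> \<int>" by (simp add: algebra_simps)
qed
instance
  by standard (transfer, simp add: algebra_simps)+
end

lift_definition imul :: "int \<Rightarrow> qz \<Rightarrow> qz" is "\<lambda>m x. of_int m * x"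
proof -
  fix m :: int and a b :: rat
  assume "a - b \<in> \<int>"
  then have "of_int m * (a - b) \<in> \<int>" by (simp add: Ints_mult)
  then show "of_int m * a - of_int m * b \<in> \<int>" by (simp add: algebra_simps)
qed

lift_definition qz_of :: "rat \<Rightarrow> qz" is "\<lambda>x. x" .

lemma imul_add: "imul (m + m') a = imul m a + imul m' a"
  by transfer (simp add: algebra_simps)
lemma imul_mult: "imul (m * m') a = imul m (imul m' a)"
  by transfer (simp add: algebra_simps)
lemma imul_plus: "imul m (a + b) = imul m a + imul m b"
  by transfer (simp add: algebra_simps)
lemma imul_0 [simp]: "imul 0 a = 0"
  by transfer simp
lemma imul_1 [simp]: "imul 1 a = a"
  by transfer simp
lemma imul_zero [simp]: "imul m 0 = 0"
  by transfer simp
lemma imul_qz_of: "imul m (qz_of x) = qz_of (of_int m * x)"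
  by transfer simp
lemma qz_of_eq0: "qz_of x = 0 \<longleftrightarrow> x \<in> \<int>"
  by transfer simp
lemma qz_of_surj: "\<exists>x. a = qz_of x"
  by transfer (metis Ints_0 diff_self)
lemma qz_inj_rep: "inj rep_qz"
  by (metis Quotient3_abs_rep Quotient3_qz injI)

definition cmul :: "int \<Rightarrow> qz \<times> rat \<Rightarrow> qz \<times> rat" where
  "cmul m c = (imul m (fst c), of_int m * snd c)"
definition pmul :: "int \<Rightarrow> ('a \<Rightarrow> qz \<times> rat) \<Rightarrow> ('a \<Rightarrow> qz \<times> rat)" where
  "pmul m v = (\<lambda>x. cmul m (v x))"
definition spt :: "('a \<Rightarrow> 'b::zero) \<Rightarrow> 'a set" where
  "spt v = {x. v x \<noteq> 0}"

lemma cmul_add: "cmul (m + m') c = cmul m c + cmul m' c"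
  by (simp add: cmul_def imul_add algebra_simps prod_eq_iff)
lemma cmul_mult: "cmul (m * m') c = cmul m (cmul m' c)"
  by (simp add: cmul_def imul_mult algebra_simps prod_eq_iff)
lemma cmul_plus: "cmul m (c + d) = cmul m c + cmul m d"
  by (simp add: cmul_def imul_plus algebra_simps prod_eq_iff)
lemma cmul_0 [simp]: "cmul 0 c = 0"
  by (simp add: cmul_def prod_eq_iff)
lemma cmul_1 [simp]: "cmul 1 c = c"
  by (simp add: cmul_def prod_eq_iff)
lemma cmul_zero [simp]: "cmul m 0 = 0"
  by (simp add: cmul_def prod_eq_iff)

lemma pmul_add: "pmul (m + m') v = pmul m v + pmul m' v"
  by (simp add: pmul_def cmul_add fun_eq_iff)
lemma pmul_mult: "pmul (m * m') v = pmul m (pmul m' v)"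
  by (simp add: pmul_def cmul_mult fun_eq_iff)
lemma pmul_plus: "pmul m (v + w) = pmul m v + pmul m w"
  by (simp add: pmul_def cmul_plus fun_eq_iff)
lemma pmul_0 [simp]: "pmul 0 v = 0"
  by (simp add: pmul_def fun_eq_iff)
lemma pmul_1 [simp]: "pmul 1 v = v"
  by (simp add: pmul_def fun_eq_iff)
lemma pmul_zero [simp]: "pmul m 0 = 0"
  by (simp add: pmul_def fun_eq_iff)
lemma pmul_uminus: "pmul (- m) v = - pmul m v"
  by (metis add.inverse_unique add.right_inverse pmul_0 pmul_add)
lemma pmul_diff: "pmul (m - m') v = pmul m v - pmul m' v"
  by (metis add_diff_cancel diff_add_cancel pmul_add)

lemma spt_pmul: "spt (pmul m v) \<subseteq> spt v"
  by (auto simp: spt_def pmul_def)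
lemma spt_plus: "spt ((v::'a \<Rightarrow> 'b::monoid_add) + w) \<subseteq> spt v \<union> spt w"
  by (auto simp: spt_def)

lemma cdiv_ex:
  assumes "n > 0"
  shows "\<exists>d. cmul (int n) d = c \<and> (c = 0 \<longrightarrow> d = 0)"
proof (cases "c = 0")
  case True
  then show ?thesis by (intro exI[of _ 0]) simp
next
  case False
  obtain x where x: "fst c = qz_of x" using qz_of_surj by blast
  let ?d = "(qz_of (x / of_nat n), snd c / of_nat n)"
  have "cmul (int n) ?d = c"
    using assms x by (simp add: cmul_def imul_qz_of prod_eq_iff)
  then show ?thesis using False by blast
qed



lemma rat_int_dvd:
  assumes "of_int k * (1 / of_nat n) \<in> (\<int> :: rat set)" "n > 0"
  shows "int n dvd k"
proof -
  obtain j where j: "of_int k * (1 / of_nat n) = (of_int j :: rat)" using assms(1) Ints_cases by blast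
  then have "(of_int k :: rat) = of_int j * of_nat n" using assms(2) by (simp add: field_simps)
  then have "k = j * int n" by (metis of_int_eq_iff of_int_mult of_int_of_nat_eq)
  then show ?thesis by simp
qed

context comm_group
begin

definition emb :: "('a \<times> ('a \<Rightarrow> qz \<times> rat)) set \<Rightarrow> bool" where
 "emb M \<longleftrightarrow> M \<subseteq> carrier G \<times> UNIV \<and> (\<forall>h v v'. (h,v)\<in>M \<longrightarrow> (h,v')\<in>M \<longrightarrow> v = v')
    \<and> (\<forall>h v h' v'. (h,v)\<in>M \<longrightarrow> (h',v')\<in>M \<longrightarrow> (h \<otimes> h', v + v') \<in> M)
    \<and> subgroup (fst`M) G \<and> (\<forall>h v. (h,v)\<in>M \<longrightarrow> v = 0 \<longrightarrow> h = \<one>)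
    \<and> (\<forall>h v. (h,v)\<in>M \<longrightarrow> finite (spt v) \<and> spt v \<subseteq> fst ` M)"

lemma emb_extend:
  assumes M: "emb M" and g: "g \<in> carrier G" "g \<notin> fst ` M"
  shows "\<exists>M'. emb M' \<and> M \<subseteq> M' \<and> M' \<noteq> M"
proof -
  define H where "H = fst ` M"
  define f where "f h = (THE v. (h,v) \<in> M)" for h
  have Msub: "M \<subseteq> carrier G \<times> UNIV" using M unfolding emb_def by blast
  have Mfun: "\<And>h v v'. (h,v)\<in>M \<Longrightarrow> (h,v')\<in>M \<Longrightarrow> v = v'" using M unfolding emb_def by blast
  have Mmul: "\<And>h v h' v'. (h,v)\<in>M \<Longrightarrow> (h',v')\<in>M \<Longrightarrow> (h \<otimes> h', v + v') \<in> M"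
    using M unfolding emb_def by blast
  have Hsub: "subgroup H G" using M unfolding emb_def H_def by blast
  have Minj: "\<And>h v. (h,v)\<in>M \<Longrightarrow> v = 0 \<Longrightarrow> h = \<one>" using M unfolding emb_def by blast
  have Mspt: "\<And>h v. (h,v)\<in>M \<Longrightarrow> finite (spt v) \<and> spt v \<subseteq> H"
    using M unfolding emb_def H_def by blast
  have fM: "f h = v" if "(h,v)\<in>M" for h v
    unfolding f_def using Mfun that by (intro the_equality) auto
  have hM: "(h, f h) \<in> M" if "h \<in> H" for h
    using that fM unfolding H_def by force
  have HG: "H \<subseteq> carrier G" by (rule subgroup.subset[OF Hsub])
  have H1: "\<one> \<in> H" by (rule subgroup.one_closed[OF Hsub])
  have Hm: "h \<otimes> h' \<in> H" if "h \<in> H" "h' \<in> H" for h h'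
    by (rule subgroup.m_closed[OF Hsub that])
  have Hinv: "inv h \<in> H" if "h \<in> H" for h
    by (rule subgroup.m_inv_closed[OF Hsub that])
  have Hpow: "h [^] (k::int) \<in> H" if "h \<in> H" for h k
    by (rule subgroup_int_pow_closed[OF Hsub that])
  have fmul: "f (h \<otimes> h') = f h + f h'" if "h \<in> H" "h' \<in> H" for h h'
    by (rule fM[OF Mmul[OF hM[OF that(1)] hM[OF that(2)]]])
  have f1: "f \<one> = 0"
    using fmul[OF H1 H1] by simp
  have finv: "f (inv h) = - f h" if "h \<in> H" for h
  proof -
    have "f h + f (inv h) = 0" using fmul[OF that Hinv[OF that]] that HG f1 by auto
    then show ?thesis by (simp add: eq_neg_iff_add_eq_0 add.commute)
  qed
  have fpow_nat: "f (h [^] (n::nat)) = pmul (int n) (f h)" if "h \<in> H" for h n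
  proof (induction n)
    case 0
    then show ?case using f1 by simp
  next
    case (Suc n)
    have hn: "h [^] n \<in> H" using Hpow[OF that, of "int n"] by (simp add: int_pow_int)
    have "f (h [^] Suc n) = f (h [^] n \<otimes> h)" by simp
    also have "\<dots> = f (h [^] n) + f h" using fmul[OF hn that] .
    also have "\<dots> = pmul (int (Suc n)) (f h)" using Suc by (simp add: pmul_add)
    finally show ?case .
  qed
  have fpow: "f (h [^] (k::int)) = pmul k (f h)" if "h \<in> H" for h k
  proof (cases "k \<ge> 0")
    case True
    then obtain n where "k = int n" using nonneg_int_cases by blast
    then show ?thesis using fpow_nat[OF that] by (simp add: int_pow_int)
  next
    case False
    define n where "n = nat (-k)"
    have k: "k = - int n" using False n_def by simp
    have hn: "h [^] n \<in> H" using Hpow[OF that, of "int n"] by (simp add: int_pow_int)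
    have "f (h [^] k) = f (inv (h [^] n))" using k HG that by (simp add: int_pow_neg_int subsetD)
    also have "\<dots> = - pmul (int n) (f h)" using finv[OF hn] fpow_nat[OF that] by simp
    also have "\<dots> = pmul k (f h)" using k by (simp add: pmul_uminus)
    finally show ?thesis .
  qed
  have fg: "f h g = 0" if "h \<in> H" for h
    using Mspt[OF hM[OF that]] g(2) unfolding H_def spt_def by blast
  have gH: "g \<notin> H" using g H_def by simp
  have "\<exists>p. (\<forall>k::int. g [^] k \<in> H \<longrightarrow> f (g [^] k) = pmul k p)
          \<and> (\<forall>k::int. cmul k (p g) = 0 \<longrightarrow> g [^] k \<in> H)
          \<and> finite (spt p) \<and> spt p \<subseteq> insert g H"
  proof (cases "\<exists>n::nat. n > 0 \<and> g [^] n \<in> H")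
    case False
    define p where "p = (\<lambda>x. if x = g then (0::qz, 1::rat) else 0)"
    have gpH: "k = 0" if gk: "g [^] k \<in> H" for k :: int
    proof (rule ccontr)
      assume k0: "k \<noteq> 0"
      show False
      proof (cases "k > 0")
        case True
        then have "g [^] (nat k) \<in> H" using gk by (simp add: pow_nat)
        moreover have "nat k > 0" using True by simp
        ultimately show False using False by blast
      next
        case False2: False
        have "g [^] (nat (-k)) = g [^] (-k)" using False2 by (simp add: pow_nat)
        also have "\<dots> = inv (g [^] k)" using g(1) by (simp add: int_pow_neg)
        finally have "g [^] (nat (-k)) \<in> H" using Hinv gk by simp
        moreover have "nat (-k) > 0" using False2 k0 by simp
        ultimately show False using False by blast
      qed
    qed
    have "g [^] k \<in> H \<longrightarrow> f (g [^] k) = pmul k p" for k :: int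
    proof
      assume "g [^] k \<in> H"
      then have "k = 0" by (rule gpH)
      then show "f (g [^] k) = pmul k p" using f1 by simp
    qed
    moreover have "cmul k (p g) = 0 \<longrightarrow> g [^] k \<in> H" for k :: int
      unfolding p_def cmul_def using H1 by (auto simp: prod_eq_iff)
    moreover have sp: "spt p \<subseteq> {g}" unfolding p_def spt_def by auto
    moreover have "finite (spt p)" using finite_subset[OF sp] by simp
    moreover have "spt p \<subseteq> insert g H" using sp by blast
    ultimately show ?thesis by blast
  next
    case True
    define n where "n = (LEAST n::nat. n > 0 \<and> g [^] n \<in> H)"
    have n: "n > 0" "g [^] n \<in> H" using LeastI_ex[OF True] unfolding n_def by auto
    have nmin: "g [^] m \<notin> H" if "0 < m" "m < n" for m :: nat
      using not_less_Least[of m "\<lambda>n. n > 0 \<and> g [^] n \<in> H"] that unfolding n_def by auto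
    have gnI: "g [^] (int n) \<in> H" using n by (simp add: int_pow_int)
    have ndvd: "int n dvd k" if gk: "g [^] k \<in> H" for k :: int
    proof -
      define r where "r = k mod int n"
      define q where "q = k div int n"
      have kq: "k = int n * q + r" unfolding r_def q_def by simp
      have r0: "0 \<le> r" "r < int n" unfolding r_def using n by auto
      have "g [^] k = g [^] (int n * q) \<otimes> g [^] r" using kq int_pow_mult[OF g(1)] by simp
      moreover have gq: "g [^] (int n * q) \<in> H"
        using Hpow[OF gnI, of q] int_pow_pow[OF g(1)] by simp
      ultimately have "g [^] r = inv (g [^] (int n * q)) \<otimes> g [^] k"
        using g(1) by (simp add: m_assoc[symmetric])
      then have grH: "g [^] r \<in> H" using Hm Hinv gq gk by simp
      have "r = 0"
      proof (rule ccontr)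
        assume "r \<noteq> 0"
        then have "0 < nat r" "nat r < n" using r0 by auto
        moreover have "g [^] (nat r) \<in> H" using grH r0 by (simp add: pow_nat)
        ultimately show False using nmin by blast
      qed
      then show ?thesis using kq by simp
    qed
    define a where "a = f (g [^] n)"
    define cd where "cd c = (SOME d. cmul (int n) d = c \<and> (c = 0 \<longrightarrow> d = 0))" for c
    have cd: "cmul (int n) (cd c) = c \<and> (c = 0 \<longrightarrow> cd c = 0)" for c
      unfolding cd_def using someI_ex[OF cdiv_ex[OF n(1), of c]] by blast
    define p where "p = (\<lambda>x. if x = g then (qz_of (1 / of_nat n), 0) else cd (a x))"
    have ag: "a g = 0" unfolding a_def using fg n(2) by simp
    have pn: "pmul (int n) p = a"
    proof
      fix x show "pmul (int n) p x = a x"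
      proof (cases "x = g")
        case True
        have "cmul (int n) (qz_of (1 / of_nat n), 0) = 0"
          using n(1) by (simp add: cmul_def imul_qz_of qz_of_eq0 prod_eq_iff)
        then show ?thesis using True ag by (simp add: pmul_def p_def)
      next
        case False
        then show ?thesis using cd by (simp add: pmul_def p_def)
      qed
    qed
    have Q1: "g [^] k \<in> H \<longrightarrow> f (g [^] k) = pmul k p" for k :: int
    proof
      assume gk: "g [^] k \<in> H"
      then obtain t where t: "k = int n * t" using ndvd by (meson dvdE)
      have "g [^] k = (g [^] (int n)) [^] t" using t int_pow_pow[OF g(1)] by simp
      then have "f (g [^] k) = pmul t (f (g [^] (int n)))" using fpow[OF gnI] by simp
      also have "\<dots> = pmul t a" unfolding a_def by (simp add: int_pow_int)
      also have "\<dots> = pmul k p" using t pn pmul_mult[of t "int n" p] by (simp add: mult.commute)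
      finally show "f (g [^] k) = pmul k p" .
    qed
    have Q2: "cmul k (p g) = 0 \<longrightarrow> g [^] k \<in> H" for k :: int
    proof
      assume "cmul k (p g) = 0"
      then have "qz_of (of_int k * (1 / of_nat n)) = 0"
        by (simp add: p_def cmul_def imul_qz_of prod_eq_iff)
      then have "int n dvd k" using rat_int_dvd n(1) qz_of_eq0 by blast
      then obtain t where t: "k = int n * t" by (meson dvdE)
      have "g [^] k = (g [^] (int n)) [^] t" using t int_pow_pow[OF g(1)] by simp
      then show "g [^] k \<in> H" using Hpow[OF gnI] by simp
    qed
    have "spt p \<subseteq> insert g (spt a)"
    proof -
      have cd0: "cd 0 = 0" using cd by blast
      show ?thesis unfolding p_def spt_def using cd0 by auto
    qed
    moreover have "finite (spt a) \<and> spt a \<subseteq> H"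
      unfolding a_def using Mspt[OF hM[OF n(2)]] by blast
    ultimately have "finite (spt p)" "spt p \<subseteq> insert g H" using finite_subset by blast+
    then show ?thesis using Q1 Q2 by blast
  qed
  then obtain p where P1: "\<And>k::int. g [^] k \<in> H \<Longrightarrow> f (g [^] k) = pmul k p"
    and P2: "\<And>k::int. cmul k (p g) = 0 \<Longrightarrow> g [^] k \<in> H"
    and P3: "finite (spt p)" "spt p \<subseteq> insert g H" by blast
  define M' where "M' = {(h \<otimes> g [^] (k::int), f h + pmul k p) | h k. h \<in> H}"
  have fstM': "fst ` M' = {h \<otimes> g [^] (k::int) | h k. h \<in> H}"
  proof (rule Set.set_eqI)
    fix x show "x \<in> fst ` M' \<longleftrightarrow> x \<in> {h \<otimes> g [^] (k::int) | h k. h \<in> H}"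
    proof
      assume "x \<in> fst ` M'" then show "x \<in> {h \<otimes> g [^] (k::int) | h k. h \<in> H}" unfolding M'_def by (auto, blast)
    next
      assume "x \<in> {h \<otimes> g [^] (k::int) | h k. h \<in> H}"
      then obtain h and k :: int where hk: "x = h \<otimes> g [^] k" "h \<in> H" by blast
      then have "(x, f h + pmul k p) \<in> M'" unfolding M'_def by blast
      then show "x \<in> fst ` M'" by (metis fst_conv image_eqI)
    qed
  qed
  have HG': "h \<in> carrier G" if "h \<in> H" for h using HG that by blast
  have gk: "g [^] (k::int) \<in> carrier G" for k using g(1) by simp
  have key: "f h + pmul k p = f h' + pmul k' p"
    if eq: "h \<otimes> g [^] k = h' \<otimes> g [^] k'" and hH: "h \<in> H" "h' \<in> H" for h h' k k'
  proof -
    define x where "x = g [^] (k - k')"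
    have xc: "x \<in> carrier G" unfolding x_def using gk .
    have "g [^] k = x \<otimes> g [^] k'" unfolding x_def using g(1) int_pow_mult[OF g(1), of "k - k'" k'] by simp
    then have "(h \<otimes> x) \<otimes> g [^] k' = h' \<otimes> g [^] k'" using eq HG' hH xc gk by (simp add: m_assoc)
    then have hx: "h \<otimes> x = h'" using HG' hH xc gk by (simp add: right_cancel)
    then have "x = inv h \<otimes> h'" using HG' hH xc by (metis inv_closed l_inv l_one m_assoc)
    then have xH: "x \<in> H" using hH Hm Hinv by simp
    have "f h' = f h + pmul (k - k') p" using fmul[OF hH(1) xH] P1[of "k - k'"] xH hx unfolding x_def by simp
    then show ?thesis using pmul_add[of "k - k'" k' p] by (simp add: algebra_simps)
  qed
  have sptM': "finite (spt v) \<and> spt v \<subseteq> fst ` M'" if hv: "(h, v) \<in> M'" for h v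
  proof -
    from hv obtain h1 and k :: int where a: "h = h1 \<otimes> g [^] k" "v = f h1 + pmul k p" "h1 \<in> H"
      unfolding M'_def by blast
    have s: "spt v \<subseteq> spt (f h1) \<union> spt p" unfolding a(2) using spt_plus[of "f h1" "pmul k p"] spt_pmul[of k p] by blast
    have s1: "finite (spt (f h1))" "spt (f h1) \<subseteq> H" using Mspt[OF hM[OF a(3)]] by auto
    have HM': "H \<subseteq> fst ` M'"
    proof
      fix x assume "x \<in> H"
      then have "x \<otimes> g [^] (0::int) \<in> fst ` M'" unfolding fstM' by blast
      then show "x \<in> fst ` M'" using \<open>x \<in> H\<close> HG' by simp
    qed
    have "\<one> \<otimes> g [^] (1::int) \<in> fst ` M'" unfolding fstM' using H1 by blast
    then have gM: "g \<in> fst ` M'" using g(1) by simp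
    show ?thesis
      using s s1 P3 HM' gM finite_subset by blast
  qed
  have emb': "emb M'"
    unfolding emb_def
  proof (intro conjI allI impI)
    show "M' \<subseteq> carrier G \<times> UNIV" unfolding M'_def using HG' gk by auto
  next
    fix h v v' assume "(h, v) \<in> M'" "(h, v') \<in> M'"
    then show "v = v'" unfolding M'_def using key by auto
  next
    fix h v h' v' assume "(h, v) \<in> M'" "(h', v') \<in> M'"
    then obtain h1 h2 and k1 k2 :: int where a: "h = h1 \<otimes> g [^] k1" "v = f h1 + pmul k1 p" "h1 \<in> H"
      and b: "h' = h2 \<otimes> g [^] k2" "v' = f h2 + pmul k2 p" "h2 \<in> H"
      unfolding M'_def by blast
    have "h \<otimes> h' = (h1 \<otimes> h2) \<otimes> g [^] (k1 + k2)"
      using a b HG' gk by (simp add: int_pow_mult[OF g(1)] m_ac)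
    moreover have "v + v' = f (h1 \<otimes> h2) + pmul (k1 + k2) p"
      using a b fmul by (simp add: pmul_add algebra_simps)
    ultimately show "(h \<otimes> h', v + v') \<in> M'" unfolding M'_def using Hm a b by blast
  next
    show "subgroup (fst ` M') G" unfolding fstM'
    proof (rule subgroupI)
      show "{h \<otimes> g [^] (k::int) |h k. h \<in> H} \<subseteq> carrier G" using HG' gk by auto
      show "{h \<otimes> g [^] (k::int) |h k. h \<in> H} \<noteq> {}" using H1 by blast
    next
      fix a assume "a \<in> {h \<otimes> g [^] (k::int) |h k. h \<in> H}"
      then obtain h and k :: int where a: "a = h \<otimes> g [^] k" "h \<in> H" by blast
      have "inv a = inv h \<otimes> g [^] (- k)"
        using a HG' gk by (simp add: int_pow_neg[OF g(1)] inv_mult)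
      then show "inv a \<in> {h \<otimes> g [^] (k::int) |h k. h \<in> H}" using Hinv a by blast
    next
      fix a b assume "a \<in> {h \<otimes> g [^] (k::int) |h k. h \<in> H}" "b \<in> {h \<otimes> g [^] (k::int) |h k. h \<in> H}"
      then obtain h1 h2 and k1 k2 :: int where a: "a = h1 \<otimes> g [^] k1" "h1 \<in> H"
        and b: "b = h2 \<otimes> g [^] k2" "h2 \<in> H" by blast
      have "a \<otimes> b = (h1 \<otimes> h2) \<otimes> g [^] (k1 + k2)"
        using a b HG' gk by (simp add: int_pow_mult[OF g(1)] m_ac)
      then show "a \<otimes> b \<in> {h \<otimes> g [^] (k::int) |h k. h \<in> H}" using Hm a b by blast
    qed
  next
    fix h v assume hv: "(h, v) \<in> M'" and v0: "v = 0"
    then obtain h1 and k :: int where a: "h = h1 \<otimes> g [^] k" "v = f h1 + pmul k p" "h1 \<in> H"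
      unfolding M'_def by blast
    have "v g = f h1 g + cmul k (p g)" using a by (simp add: pmul_def)
    then have "cmul k (p g) = 0" using v0 fg[OF a(3)] by simp
    then have gkH: "g [^] k \<in> H" by (rule P2)
    then have "f (h1 \<otimes> g [^] k) = 0" using fmul[OF a(3) gkH] P1[OF gkH] a v0 by simp
    then have "(h1 \<otimes> g [^] k, 0) \<in> M" using hM[OF Hm[OF a(3) gkH]] by simp
    then show "h = \<one>" using Minj a by blast
  next
    fix h v assume "(h, v) \<in> M'"
    then show "finite (spt v)" using sptM' by blast
  next
    fix h v assume "(h, v) \<in> M'"
    then show "spt v \<subseteq> fst ` M'" using sptM' by blast
  qed
  moreover have "M \<subseteq> M'"
  proof
    fix x assume "x \<in> M"
    then obtain h v where x: "x = (h, v)" "(h, v) \<in> M" by (metis surj_pair)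
    then have "h \<in> H" unfolding H_def by force
    then have "(h \<otimes> g [^] (0::int), f h + pmul 0 p) \<in> M'" unfolding M'_def by blast
    then show "x \<in> M'" using x fM \<open>h \<in> H\<close> HG' by simp
  qed
  moreover have "M' \<noteq> M"
  proof
    assume "M' = M"
    have "\<one> \<otimes> g [^] (1::int) \<in> fst ` M'" unfolding fstM' using H1 by blast
    then show False using g \<open>M' = M\<close> by simp
  qed
  ultimately show ?thesis by blast
qed

lemma emb_single: "emb {(\<one>, 0)}"
  unfolding emb_def using triv_subgroup by (auto simp: spt_def)

lemma emb_Union:
  assumes ne: "\<C> \<noteq> {}" and ch: "subset.chain {M. emb M} \<C>"
  shows "emb (\<Union>\<C>)"
proof -
  have CA: "\<And>M. M \<in> \<C> \<Longrightarrow> emb M" using ch unfolding subset_chain_def by blast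
  have cmp: "\<And>X Y. X \<in> \<C> \<Longrightarrow> Y \<in> \<C> \<Longrightarrow> X \<subseteq> Y \<or> Y \<subseteq> X" using ch unfolding subset_chain_def by blast
  have two: "\<exists>M\<in>\<C>. a \<in> M \<and> b \<in> M" if ab: "a \<in> \<Union>\<C>" "b \<in> \<Union>\<C>" for a b
  proof -
    obtain X Y where "X \<in> \<C>" "Y \<in> \<C>" "a \<in> X" "b \<in> Y" using ab by blast
    then show ?thesis using cmp[of X Y] by blast
  qed
  have fstU: "fst ` \<Union>\<C> = (\<Union>M\<in>\<C>. fst ` M)" by blast
  show ?thesis
    unfolding emb_def
  proof (intro conjI allI impI)
    show "\<Union> \<C> \<subseteq> carrier G \<times> UNIV" using CA unfolding emb_def by blast
  next
    fix h v v' assume "(h, v) \<in> \<Union> \<C>" "(h, v') \<in> \<Union> \<C>"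
    then obtain M where "M \<in> \<C>" "(h, v) \<in> M" "(h, v') \<in> M" using two by blast
    then show "v = v'" using CA unfolding emb_def by blast
  next
    fix h v h' v' assume "(h, v) \<in> \<Union> \<C>" "(h', v') \<in> \<Union> \<C>"
    then obtain M where "M \<in> \<C>" "(h, v) \<in> M" "(h', v') \<in> M" using two by blast
    then have "(h \<otimes> h', v + v') \<in> M" using CA unfolding emb_def by blast
    then show "(h \<otimes> h', v + v') \<in> \<Union> \<C>" using \<open>M \<in> \<C>\<close> by blast
  next
    have sg: "subgroup (fst ` M) G" if "M \<in> \<C>" for M using CA[OF that] unfolding emb_def by blast
    show "subgroup (fst ` \<Union> \<C>) G"
    proof (rule subgroupI)
      show "fst ` \<Union> \<C> \<subseteq> carrier G" using sg subgroup.subset by blast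
      obtain M where "M \<in> \<C>" using ne by blast
      then have "\<one> \<in> fst ` M" using sg subgroup.one_closed by blast
      then show "fst ` \<Union> \<C> \<noteq> {}" using \<open>M \<in> \<C>\<close> by blast
    next
      fix a assume "a \<in> fst ` \<Union> \<C>"
      then obtain M where M: "M \<in> \<C>" "a \<in> fst ` M" by blast
      then have "inv a \<in> fst ` M" using subgroup.m_inv_closed[OF sg[OF M(1)]] by blast
      then show "inv a \<in> fst ` \<Union> \<C>" using M by blast
    next
      fix a b assume "a \<in> fst ` \<Union> \<C>" "b \<in> fst ` \<Union> \<C>"
      then obtain av bv where "(a, av) \<in> \<Union>\<C>" "(b, bv) \<in> \<Union>\<C>" by force
      then obtain M where M: "M \<in> \<C>" "(a, av) \<in> M" "(b, bv) \<in> M" using two by blast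
      then have "a \<in> fst ` M" "b \<in> fst ` M" by force+
      then have "a \<otimes> b \<in> fst ` M" using subgroup.m_closed[OF sg[OF M(1)]] by blast
      then show "a \<otimes> b \<in> fst ` \<Union> \<C>" using M by blast
    qed
  next
    fix h v assume "(h, v) \<in> \<Union> \<C>" "v = 0"
    then show "h = \<one>" using CA unfolding emb_def by blast
  next
    fix h v assume "(h, v) \<in> \<Union> \<C>"
    then obtain M where "M \<in> \<C>" "(h, v) \<in> M" by blast
    then show "finite (spt v)" using CA unfolding emb_def by blast
  next
    fix h v assume "(h, v) \<in> \<Union> \<C>"
    then obtain M where M: "M \<in> \<C>" "(h, v) \<in> M" by blast
    then have "spt v \<subseteq> fst ` M" using CA unfolding emb_def by blast
    then show "spt v \<subseteq> fst ` \<Union> \<C>" using M by blast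
  qed
qed

lemma embedding:
  "\<exists>f :: 'a \<Rightarrow> ('a \<Rightarrow> qz \<times> rat). (\<forall>x\<in>carrier G. \<forall>y\<in>carrier G. f (x \<otimes> y) = f x + f y)
     \<and> (\<forall>x\<in>carrier G. f x = 0 \<longrightarrow> x = \<one>)
     \<and> (\<forall>x\<in>carrier G. finite (spt (f x)) \<and> spt (f x) \<subseteq> carrier G)"
proof -
  have "\<exists>M\<in>{M. emb M}. \<forall>X\<in>{M. emb M}. M \<subseteq> X \<longrightarrow> X = M"
    by (rule subset_Zorn_nonempty) (use emb_single emb_Union in blast)+
  then obtain M where M: "emb M" and mx: "\<And>X. emb X \<Longrightarrow> M \<subseteq> X \<Longrightarrow> X = M" by blast
  have Msub: "M \<subseteq> carrier G \<times> UNIV" using M unfolding emb_def by blast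
  have fstM: "fst ` M = carrier G"
  proof (rule ccontr)
    assume "fst ` M \<noteq> carrier G"
    then obtain g where "g \<in> carrier G" "g \<notin> fst ` M" using Msub by force
    then show False using emb_extend[OF M] mx by blast
  qed
  define f where "f h = (THE v. (h,v) \<in> M)" for h
  have Mfun: "\<And>h v v'. (h,v)\<in>M \<Longrightarrow> (h,v')\<in>M \<Longrightarrow> v = v'" using M unfolding emb_def by blast
  have fM: "f h = v" if "(h,v)\<in>M" for h v
    unfolding f_def using Mfun that by (intro the_equality) auto
  have hM: "(h, f h) \<in> M" if "h \<in> carrier G" for h
    using that fM fstM by force
  have Mmul: "\<And>h v h' v'. (h,v)\<in>M \<Longrightarrow> (h',v')\<in>M \<Longrightarrow> (h \<otimes> h', v + v') \<in> M"
    using M unfolding emb_def by blast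
  have Minj: "\<And>h v. (h,v)\<in>M \<Longrightarrow> v = 0 \<Longrightarrow> h = \<one>" using M unfolding emb_def by blast
  have Mspt: "\<And>h v. (h,v)\<in>M \<Longrightarrow> finite (spt v) \<and> spt v \<subseteq> fst ` M"
    using M unfolding emb_def by blast
  show ?thesis
  proof (rule exI[of _ f], intro conjI ballI impI)
    fix x y assume "x \<in> carrier G" "y \<in> carrier G"
    then show "f (x \<otimes> y) = f x + f y"
      by (intro fM Mmul hM)
  next
    fix x assume "x \<in> carrier G" "f x = 0"
    then show "x = \<one>" using Minj[OF hM] by blast
  next
    fix x assume "x \<in> carrier G"
    then show "finite (spt (f x))" using Mspt[OF hM] by blast
  next
    fix x assume "x \<in> carrier G"
    then show "spt (f x) \<subseteq> carrier G" using Mspt[OF hM] fstM by simp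
  qed
qed

end



definition sep :: "'k set \<Rightarrow> 'k set \<Rightarrow> 'k" where
  "sep A B = (SOME k. k \<in> (A - B) \<union> (B - A))"

definition Fsep :: "('a \<Rightarrow> 'k set) \<Rightarrow> 'a set \<Rightarrow> 'k set" where
  "Fsep e S = (\<lambda>(s,t). sep (e s) (e t)) ` {(s,t). s \<in> S \<and> t \<in> S \<and> s \<noteq> t}"

lemma sep_in: 
  assumes "A \<noteq> B" shows "sep A B \<in> (A - B) \<union> (B - A)"
proof -
  have "\<exists>k. k \<in> (A - B) \<union> (B - A)" using assms unfolding set_eq_iff by blast
  then show ?thesis unfolding sep_def by (rule someI_ex)
qed

lemma Fsep_sep:
  assumes "inj_on e S" "s \<in> S" "t \<in> S" "s \<noteq> t"
  shows "e s \<inter> Fsep e S \<noteq> e t \<inter> Fsep e S"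
proof
  assume eq: "e s \<inter> Fsep e S = e t \<inter> Fsep e S"
  have ne: "e s \<noteq> e t" using assms by (auto dest: inj_onD)
  define k where "k = sep (e s) (e t)"
  have "(s, t) \<in> {(s,t). s \<in> S \<and> t \<in> S \<and> s \<noteq> t}" using assms by simp
  then have kF: "k \<in> Fsep e S" unfolding Fsep_def k_def by (rule image_eqI[rotated]) simp
  have "(k \<in> e s \<inter> Fsep e S) = (k \<in> e t \<inter> Fsep e S)" using eq by simp
  then have "(k \<in> e s) = (k \<in> e t)" using kF by simp
  then show False using sep_in[OF ne] unfolding k_def by blast
qed

lemma Fsep_fin: "finite S \<Longrightarrow> finite (Fsep e S)"
proof -
  assume "finite S"
  then have "finite (S \<times> S)" by simp
  moreover have "{(s,t). s \<in> S \<and> t \<in> S \<and> s \<noteq> t} \<subseteq> S \<times> S" by auto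
  ultimately have "finite {(s,t). s \<in> S \<and> t \<in> S \<and> s \<noteq> t}" by (rule finite_subset[rotated])
  then show ?thesis unfolding Fsep_def by (rule finite_imageI)
qed

lemma Fsep_sub:
  assumes "inj_on e S" "\<And>s. s \<in> S \<Longrightarrow> e s \<subseteq> K"
  shows "Fsep e S \<subseteq> K"
proof
  fix k assume "k \<in> Fsep e S"
  then obtain q where q: "q \<in> {(s,t). s \<in> S \<and> t \<in> S \<and> s \<noteq> t}" "k = (\<lambda>(s,t). sep (e s) (e t)) q"
    unfolding Fsep_def by (rule imageE)
  obtain s t where "q = (s, t)" by (cases q)
  then have st: "s \<in> S" "t \<in> S" "s \<noteq> t" "k = sep (e s) (e t)" using q by auto
  have ne: "e s \<noteq> e t" using assms(1) st by (auto dest: inj_onD)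
  show "k \<in> K" using sep_in[OF ne] st assms(2) by blast
qed

lemma sep_sum:
  fixes u :: "'a \<Rightarrow> 'b::comm_monoid_add" and e :: "'a \<Rightarrow> 'k set"
  assumes U: "finite U" "s \<in> U"
    and sepF: "\<And>t t'. t \<in> spt u \<Longrightarrow> t' \<in> spt u \<Longrightarrow> t \<noteq> t' \<Longrightarrow> e t \<inter> F \<noteq> e t' \<inter> F"
    and s: "s \<in> spt u"
    and same: "\<And>t. t \<in> U \<Longrightarrow> e t \<inter> F = e s \<inter> F"
  shows "sum u U = u s"
proof -
  have z: "u t = 0" if "t \<in> U - {s}" for t
  proof (rule ccontr)
    assume "u t \<noteq> 0"
    then have "t \<in> spt u" unfolding spt_def by simp
    then show False using sepF[of t s] s same that by blast
  qed
  have "sum u U = u s + sum u (U - {s})" by (rule sum.remove[OF U])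
  also have "sum u (U - {s}) = 0" using z by (intro sum.neutral) blast
  finally show ?thesis by simp
qed

lemma data_lepoll:
  assumes K: "infinite K" and k0: "k0 \<in> K"
  shows "Fpow K \<times> Fpow K \<times> (UNIV :: (qz \<times> rat) set) \<lesssim> K - {k0}"
proof -
  have "inj (\<lambda>(a, b). (rep_qz a, b))" using qz_inj_rep by (auto simp: inj_def)
  then have "(UNIV :: (qz \<times> rat) set) \<lesssim> (UNIV :: (rat \<times> rat) set)"
    unfolding lepoll_def by blast
  also have "(UNIV :: (rat \<times> rat) set) \<lesssim> (UNIV :: nat set)"
    unfolding lepoll_def by (rule exI[of _ to_nat]) simp
  also have "(UNIV :: nat set) \<lesssim> K" using K infinite_le_lepoll by blast
  finally have Q: "(UNIV :: (qz \<times> rat) set) \<lesssim> K" .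
  have FK: "Fpow K \<lesssim> K" using eqpoll_Fpow[OF K] eqpoll_imp_lepoll by blast
  have KK: "K \<times> K \<approx> K" using card_of_Times_same_infinite[OF K] eqpoll_iff_card_of_ordIso by blast
  have "Fpow K \<times> Fpow K \<times> (UNIV :: (qz \<times> rat) set) \<lesssim> K \<times> K \<times> K"
    using FK Q by (intro times_lepoll_mono) auto
  also have "K \<times> K \<times> K \<lesssim> K \<times> K" using KK by (intro times_lepoll_mono eqpoll_imp_lepoll) auto
  also have "K \<times> K \<lesssim> K" using KK eqpoll_imp_lepoll by blast
  also have "K \<lesssim> K - {k0}"
  proof -
    have "infinite (K - {k0})" using K by simp
    then have "insert k0 (K - {k0}) \<approx> K - {k0}" by (rule infinite_insert_eqpoll)
    moreover have "insert k0 (K - {k0}) = K" using k0 by blast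
    ultimately show ?thesis using eqpoll_imp_lepoll by simp
  qed
  finally show ?thesis .
qed



lemma colouring:
  fixes G :: "('a, 'm) monoid_scheme" and K :: "'k set"
  assumes G: "comm_group G" and K: "infinite K" and GK: "carrier G \<approx> Pow K"
  shows "\<exists>c \<in> carrier G \<rightarrow> K. \<forall>x \<in> carrier G. \<forall>y \<in> carrier G.
              x \<noteq> \<one>\<^bsub>G\<^esub> \<and> y \<noteq> \<one>\<^bsub>G\<^esub> \<and> c x = c y \<longrightarrow> c x \<noteq> c (x \<otimes>\<^bsub>G\<^esub> y)"
proof -
  obtain f :: "'a \<Rightarrow> ('a \<Rightarrow> qz \<times> rat)" where
    fh: "\<And>x y. x \<in> carrier G \<Longrightarrow> y \<in> carrier G \<Longrightarrow> f (x \<otimes>\<^bsub>G\<^esub> y) = f x + f y"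
    and f0: "\<And>x. x \<in> carrier G \<Longrightarrow> f x = 0 \<Longrightarrow> x = \<one>\<^bsub>G\<^esub>"
    and fs: "\<And>x. x \<in> carrier G \<Longrightarrow> finite (spt (f x))"
    and fsc: "\<And>x. x \<in> carrier G \<Longrightarrow> spt (f x) \<subseteq> carrier G"
    using comm_group.embedding[OF G] by blast
  obtain e where e: "bij_betw e (carrier G) (Pow K)" using GK unfolding eqpoll_def by blast
  have einj: "inj_on e (carrier G)" using e bij_betw_def by blast
  have eK: "e x \<subseteq> K" if "x \<in> carrier G" for x using e that bij_betwE by blast
  obtain k0 where k0: "k0 \<in> K" using K by (metis finite.emptyI ex_in_conv)
  define Dset where "Dset = Fpow K \<times> Fpow K \<times> (UNIV :: (qz \<times> rat) set)"
  have "Dset \<lesssim> K - {k0}" unfolding Dset_def by (rule data_lepoll[OF K k0])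
  then obtain \<iota> where \<iota>: "inj_on \<iota> Dset" "\<iota> ` Dset \<subseteq> K - {k0}" unfolding lepoll_def by blast
  define S where "S z = spt (f z)" for z
  define s where "s z = (SOME t. t \<in> S z)" for z
  define F where "F z = Fsep e (S z)" for z
  define D where "D z = (F z, e (s z) \<inter> F z, f z (s z))" for z
  define c where "c z = (if z = \<one>\<^bsub>G\<^esub> then k0 else \<iota> (D z))" for z
  have sS: "s z \<in> S z" if "z \<in> carrier G" "z \<noteq> \<one>\<^bsub>G\<^esub>" for z
  proof -
    have "f z \<noteq> 0" using f0 that by blast
    then obtain t where "f z t \<noteq> 0" by (auto simp: fun_eq_iff)
    then have "\<exists>t. t \<in> S z" unfolding S_def spt_def by blast
    then show ?thesis unfolding s_def by (rule someI_ex)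
  qed
  have Sc: "S z \<subseteq> carrier G" if "z \<in> carrier G" for z using fsc that S_def by simp
  have injS: "inj_on e (S z)" if "z \<in> carrier G" for z using inj_on_subset[OF einj Sc[OF that]] .
  have FK: "F z \<subseteq> K" "finite (F z)" if "z \<in> carrier G" for z
  proof -
    show "F z \<subseteq> K" unfolding F_def
      by (rule Fsep_sub[OF injS[OF that]]) (use Sc[OF that] eK in blast)
    show "finite (F z)" unfolding F_def using fs[OF that] S_def by (simp add: Fsep_fin)
  qed
  have DD: "D z \<in> Dset" if "z \<in> carrier G" for z
    unfolding D_def Dset_def Fpow_def using FK[OF that] by auto
  have cK: "c \<in> carrier G \<rightarrow> K"
  proof
    fix z assume "z \<in> carrier G"
    then show "c z \<in> K" unfolding c_def using DD \<iota>(2) k0 by auto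
  qed
  have sumD: "sum (f z) U = snd (snd (D z))"
    if z: "z \<in> carrier G" "z \<noteq> \<one>\<^bsub>G\<^esub>" and U: "finite U" "s z \<in> U"
      and same: "\<And>t. t \<in> U \<Longrightarrow> e t \<inter> F z = e (s z) \<inter> F z" for z U
  proof -
    have "sum (f z) U = f z (s z)"
    proof (rule sep_sum[OF U])
      show "s z \<in> spt (f z)" using sS[OF z] S_def by simp
      fix t t' assume "t \<in> spt (f z)" "t' \<in> spt (f z)" "t \<noteq> t'"
      then show "e t \<inter> F z \<noteq> e t' \<inter> F z"
        unfolding F_def using Fsep_sep[OF injS[OF z(1)]] S_def by simp
    next
      fix t assume "t \<in> U" then show "e t \<inter> F z = e (s z) \<inter> F z" by (rule same)
    qed
    then show ?thesis unfolding D_def by simp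
  qed
  have main: "False"
    if xy: "x \<in> carrier G" "y \<in> carrier G" "x \<noteq> \<one>\<^bsub>G\<^esub>" "y \<noteq> \<one>\<^bsub>G\<^esub>"
      and cxy: "c x = c y" "c x = c (x \<otimes>\<^bsub>G\<^esub> y)" for x y
  proof -
    have xyc: "x \<otimes>\<^bsub>G\<^esub> y \<in> carrier G" using xy G by (simp add: comm_group_def group.is_monoid monoid.m_closed)
    have cx: "c x = \<iota> (D x)" "c y = \<iota> (D y)" using xy c_def by auto
    show False
    proof (cases "x \<otimes>\<^bsub>G\<^esub> y = \<one>\<^bsub>G\<^esub>")
      case True
      then have "c (x \<otimes>\<^bsub>G\<^esub> y) = k0" unfolding c_def by simp
      moreover have "\<iota> (D x) \<noteq> k0" using DD[OF xy(1)] \<iota>(2) by blast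
      ultimately show False using cx cxy by simp
    next
      case False
      define z where "z = x \<otimes>\<^bsub>G\<^esub> y"
      have zc: "z \<in> carrier G" "z \<noteq> \<one>\<^bsub>G\<^esub>" using xyc False z_def by auto
      have cz: "c z = \<iota> (D z)" using zc c_def by auto
      have "\<iota> (D x) = \<iota> (D y)" using cx cxy(1) by simp
      then have Dxy: "D x = D y" using inj_onD[OF \<iota>(1) _ DD[OF xy(1)] DD[OF xy(2)]] by blast
      have czz: "c x = c z" using cxy(2) unfolding z_def .
      have "\<iota> (D x) = \<iota> (D z)" using czz unfolding cx(1) cz .
      then have Dxz: "D x = D z" using inj_onD[OF \<iota>(1) _ DD[OF xy(1)] DD[OF zc(1)]] by blast
      have Fy: "F y = F x" "e (s y) \<inter> F x = e (s x) \<inter> F x" "f y (s y) = f x (s x)"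
        using Dxy unfolding D_def by auto
      have Fz: "F z = F x" "e (s z) \<inter> F x = e (s x) \<inter> F x" "f z (s z) = f x (s x)"
        using Dxz unfolding D_def by auto
      define U where "U = (S x \<union> S y) \<inter> {t. e t \<inter> F x = e (s x) \<inter> F x}"
      have Uf: "finite U" unfolding U_def S_def using fs xy by auto
      have fz: "f z = f x + f y" using fh xy z_def by simp
      have Sz: "S z \<subseteq> S x \<union> S y" unfolding S_def fz by (rule spt_plus)
      have sx: "sum (f x) U = f x (s x)"
      proof -
        have h1: "s x \<in> U" unfolding U_def using sS[OF xy(1) xy(3)] by simp
        have h2: "\<And>t. t \<in> U \<Longrightarrow> e t \<inter> F x = e (s x) \<inter> F x" unfolding U_def by simp
        have "sum (f x) U = snd (snd (D x))" by (rule sumD[OF xy(1) xy(3) Uf h1 h2])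
        then show ?thesis unfolding D_def by simp
      qed
      have sy: "sum (f y) U = f x (s x)"
      proof -
        have h1: "s y \<in> U" unfolding U_def using sS[OF xy(2) xy(4)] Fy by simp
        have h2: "\<And>t. t \<in> U \<Longrightarrow> e t \<inter> F y = e (s y) \<inter> F y" unfolding U_def using Fy by simp
        have "sum (f y) U = snd (snd (D y))" by (rule sumD[OF xy(2) xy(4) Uf h1 h2])
        then show ?thesis unfolding D_def using Fy by simp
      qed
      have sz: "sum (f z) U = f x (s x)"
      proof -
        have h1: "s z \<in> U" unfolding U_def using sS[OF zc] Sz Fz by auto
        have h2: "\<And>t. t \<in> U \<Longrightarrow> e t \<inter> F z = e (s z) \<inter> F z" unfolding U_def using Fz by simp
        have "sum (f z) U = snd (snd (D z))" by (rule sumD[OF zc Uf h1 h2])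
        then show ?thesis unfolding D_def using Fz by simp
      qed
      have "sum (f z) U = sum (f x) U + sum (f y) U" unfolding fz by (simp add: sum.distrib)
      then have "f x (s x) = 0" using sx sy sz by simp
      moreover have "f x (s x) \<noteq> 0" using sS[OF xy(1) xy(3)] unfolding S_def spt_def by simp
      ultimately show False by simp
    qed
  qed
  show ?thesis using cK main by blast
qed

lemma noarrow:
  fixes H :: "('a, 'm) monoid_scheme" and K :: "'k set"
  assumes H: "group H" and c: "c \<in> carrier H \<rightarrow> K"
    and P: "\<forall>x \<in> carrier H. \<forall>y \<in> carrier H.
              x \<noteq> \<one>\<^bsub>H\<^esub> \<and> y \<noteq> \<one>\<^bsub>H\<^esub> \<and> c x = c y \<longrightarrow> c x \<noteq> c (x \<otimes>\<^bsub>H\<^esub> y)"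
  shows "\<not> AFP_arrow_omega H K"
proof
  assume "AFP_arrow_omega H K"
  then obtain g :: "nat \<Rightarrow> 'a" and col where g: "inj g" "range g \<subseteq> carrier H"
    and col: "\<forall>x \<in> AFP H g. c x = col"
    unfolding AFP_arrow_omega_def using c by blast
  define a where "a = (if g 0 = \<one>\<^bsub>H\<^esub> \<or> g 1 = \<one>\<^bsub>H\<^esub> then 2 else (0::nat))"
  have a1: "g a \<noteq> \<one>\<^bsub>H\<^esub>" "g (Suc a) \<noteq> \<one>\<^bsub>H\<^esub>"
  proof -
    have d: "g i \<noteq> g j" if "i \<noteq> j" for i j using g(1) that by (simp add: inj_eq)
    show "g a \<noteq> \<one>\<^bsub>H\<^esub>" unfolding a_def using d[of 2 0] d[of 2 1] by auto
    show "g (Suc a) \<noteq> \<one>\<^bsub>H\<^esub>" unfolding a_def using d[of 3 0] d[of 3 1] d[of 1 0] by auto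
  qed
  have m1: "g a \<in> AFP H g" unfolding AFP_def by (rule CollectI, rule exI[of _ a], rule exI[of _ 0]) simp
  have m2: "g (Suc a) \<in> AFP H g" unfolding AFP_def by (rule CollectI, rule exI[of _ "Suc a"], rule exI[of _ 0]) simp
  have m3: "g a \<otimes>\<^bsub>H\<^esub> g (Suc a) \<in> AFP H g" unfolding AFP_def
    by (rule CollectI, rule exI[of _ a], rule exI[of _ 1]) simp
  have "c (g a) = col" "c (g (Suc a)) = col" "c (g a \<otimes>\<^bsub>H\<^esub> g (Suc a)) = col"
    using col m1 m2 m3 by auto
  moreover have "g a \<in> carrier H" "g (Suc a) \<in> carrier H" using g(2) by auto
  ultimately show False using P a1 by metis
qed

definition boolgrp :: "'k set \<Rightarrow> 'k set monoid" where
  "boolgrp K = \<lparr>carrier = Pow K, mult = (\<lambda>A B. (A - B) \<union> (B - A)), one = {}\<rparr>"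

lemma boolgrp_comm: "comm_group (boolgrp K)"
  by (rule comm_groupI) (auto simp: boolgrp_def)

theorem mainTheorem3:
  fixes K :: "'k set" and G :: "'a monoid"
  assumes "infinite K"
  shows "(\<exists>H :: 'k set monoid. group H \<and> carrier H \<approx> Pow K \<and> \<not> AFP_arrow_omega H K)
       \<and> (comm_group G \<and> carrier G \<approx> Pow K \<longrightarrow>
           (\<exists>c \<in> carrier G \<rightarrow> K. \<forall>x \<in> carrier G. \<forall>y \<in> carrier G.
              x \<noteq> \<one>\<^bsub>G\<^esub> \<and> y \<noteq> \<one>\<^bsub>G\<^esub> \<and> c x = c y \<longrightarrow> c x \<noteq> c (x \<otimes>\<^bsub>G\<^esub> y)))"
proof (intro conjI impI)
  have cg: "comm_group (boolgrp K)" by (rule boolgrp_comm)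
  have gr: "group (boolgrp K)" using cg comm_group_def by blast
  have car: "carrier (boolgrp K) \<approx> Pow K" by (simp add: boolgrp_def)
  obtain c where "c \<in> carrier (boolgrp K) \<rightarrow> K" "\<forall>x \<in> carrier (boolgrp K). \<forall>y \<in> carrier (boolgrp K).
              x \<noteq> \<one>\<^bsub>boolgrp K\<^esub> \<and> y \<noteq> \<one>\<^bsub>boolgrp K\<^esub> \<and> c x = c y \<longrightarrow> c x \<noteq> c (x \<otimes>\<^bsub>boolgrp K\<^esub> y)"
    using colouring[OF cg assms car] by blast
  then have "\<not> AFP_arrow_omega (boolgrp K) K" by (intro noarrow[OF gr])
  then show "\<exists>H :: 'k set monoid. group H \<and> carrier H \<approx> Pow K \<and> \<not> AFP_arrow_omega H K"
    using gr car by blast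
next
  assume "comm_group G \<and> carrier G \<approx> Pow K"
  then show "\<exists>c \<in> carrier G \<rightarrow> K. \<forall>x \<in> carrier G. \<forall>y \<in> carrier G.
              x \<noteq> \<one>\<^bsub>G\<^esub> \<and> y \<noteq> \<one>\<^bsub>G\<^esub> \<and> c x = c y \<longrightarrow> c x \<noteq> c (x \<otimes>\<^bsub>G\<^esub> y)"
    using colouring[OF _ assms] by blast
qed

end
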